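(* Let $n\geq 2$ be an integer and $V$ a $\mathbb{Q}[\operatorname{SL}_2(\mathbb{Z})]$-module of length $\leq n$. Suppose that for all $k = 1,\dots, n$ one has in $\operatorname{End} V$: \[\frac{1}{(n-k)!}\,w x^{n-k} w x^{n-1} = \frac{(-1)^{n-k}}{(k-1)!}\, x^{k-1} w x^{n-1}.\] Then $V$ has a $\mathbb{Q}[\operatorname{SL}_2(\mathbb{Z})]$-submodule $V_\top$ such that $V/V_\top$ has length $\leq n-1$, and $V_\top \simeq \bigoplus_I \mathbb{Q}\otimes_\mathbb{Z}\operatorname{Sym}^{n-1} \operatorname{Nat} \operatorname{SL}_2(\mathbb{Z})$ as $\mathbb{Q}[\operatorname{SL}_2(\mathbb{Z})]$-modules, for some index set $I$.
   Context: Let $u = \begin{pmatrix}1 & 1 \\ 0 & 1\end{pmatrix}$ and $w = \begin{pmatrix}0 & 1 \\ -1 & 0 \end{pmatrix}$ in $\operatorname{SL}_2(\mathbb{Z})$. The length of an $\operatorname{SL}_2(\mathbb{Z})$-module $V$ is the least $k$ with $(u-1)^k\cdot V = 0$. For a $\mathbb{Q}[\operatorname{SL}_2(\mathbb{Z})]$-module of finite length, $x = \log u = \sum_{k \geq 1} (-1)^{k+1}\frac{(u-1)^k}{k}\in\operatorname{End} V$ (a finite sum). $\mathbb{Q}\otimes_\mathbb{Z}\operatorname{Sym}^{n-1}\operatorname{Nat}\operatorname{SL}_2(\mathbb{Z})$ is the $\mathbb{Q}$-space of homogeneous polynomials of degree $n-1$ in $X,Y$ with the substitution action of $\operatorname{SL}_2(\mathbb{Z})\le\operatorname{SL}_2(\mathbb{Q})$.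 *)

theory Defs
  imports "HOL-Analysis.Analysis"
begin

definition SL2Z :: "(int^2^2) set" where
  "SL2Z = {A. det A = 1}"

text \<open>u = [[1,1],[0,1]] and w = [[0,1],[-1,0]]; entry A $ i $ j is row i, column j.\<close>
definition mat_u :: "int^2^2" where
  "mat_u = (\<chi> i j. if i = j then 1 else if i = 1 \<and> j = 2 then 1 else 0)"

definition mat_w :: "int^2^2" where
  "mat_w = (\<chi> i j. if i = 1 \<and> j = 2 then 1 else if i = 2 \<and> j = 1 then -1 else 0)"

definition sl2_rep :: "(rat \<Rightarrow> 'v::ab_group_add \<Rightarrow> 'v) \<Rightarrow> (int^2^2 \<Rightarrow> 'v \<Rightarrow> 'v) \<Rightarrow> bool" where
  "sl2_rep smul rho \<longleftrightarrow>
     vector_space smul \<and>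
     (\<forall>A\<in>SL2Z. Vector_Spaces.linear smul smul (rho A)) \<and>
     rho (mat 1) = id \<and>
     (\<forall>A\<in>SL2Z. \<forall>B\<in>SL2Z. rho (A ** B) = rho A \<circ> rho B)"

definition u_minus_1 :: "(int^2^2 \<Rightarrow> 'v \<Rightarrow> 'v) \<Rightarrow> 'v \<Rightarrow> 'v::ab_group_add" where
  "u_minus_1 rho = (\<lambda>v. rho mat_u v - v)"

definition rep_length :: "(int^2^2 \<Rightarrow> 'v::ab_group_add \<Rightarrow> 'v) \<Rightarrow> nat" where
  "rep_length (rho :: int^2^2 \<Rightarrow> 'v::ab_group_add \<Rightarrow> 'v) = (LEAST k. \<forall>v. (u_minus_1 rho ^^ k) v = 0)"

text \<open>x = log u = sum_{k>=1} (-1)^(k+1) (u-1)^k / k, a finite sum (terms with k > length vanish).\<close>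
definition log_u :: "(rat \<Rightarrow> 'v \<Rightarrow> 'v) \<Rightarrow> (int^2^2 \<Rightarrow> 'v \<Rightarrow> 'v) \<Rightarrow> 'v \<Rightarrow> 'v::ab_group_add" where
  "log_u smul rho = (\<lambda>v. \<Sum>k\<in>{1..rep_length rho}.
      smul ((-1) ^ (k + 1) / of_nat k) ((u_minus_1 rho ^^ k) v))"

definition sl2_submodule :: "(rat \<Rightarrow> 'v \<Rightarrow> 'v) \<Rightarrow> (int^2^2 \<Rightarrow> 'v \<Rightarrow> 'v) \<Rightarrow> 'v::ab_group_add set \<Rightarrow> bool" where
  "sl2_submodule smul rho S \<longleftrightarrow>
     module.subspace smul S \<and> (\<forall>A\<in>SL2Z. \<forall>v\<in>S. rho A v \<in> S)"

text \<open>Q (x) Sym^d Nat: homogeneous polynomials of degree d in X, Y over Q, represented by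
  their polynomial functions Q^2 -> Q (faithful since Q is infinite).\<close>
definition hom_poly :: "nat \<Rightarrow> (rat \<times> rat \<Rightarrow> rat) set" where
  "hom_poly d = {f. \<exists>c :: nat \<Rightarrow> rat. \<forall>x y. f (x, y) = (\<Sum>i\<le>d. c i * x ^ i * y ^ (d - i))}"

definition subst_act :: "int^2^2 \<Rightarrow> (rat \<times> rat \<Rightarrow> rat) \<Rightarrow> (rat \<times> rat \<Rightarrow> rat)" where
  "subst_act g P = (\<lambda>(x, y). P (of_int (g$1$1) * x + of_int (g$2$1) * y,
                              of_int (g$1$2) * x + of_int (g$2$2) * y))"

definition dsum_sym :: "nat \<Rightarrow> 'i set \<Rightarrow> ('i \<Rightarrow> rat \<times> rat \<Rightarrow> rat) set" where
  "dsum_sym d I = {F. (\<forall>i. F i \<in> hom_poly d) \<and> (\<forall>i. i \<notin> I \<longrightarrow> F i = (\<lambda>_. 0))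
                      \<and> finite {i. F i \<noteq> (\<lambda>_. 0)}}"

definition iso_to_dsum_sym ::
  "(rat \<Rightarrow> 'v \<Rightarrow> 'v) \<Rightarrow> (int^2^2 \<Rightarrow> 'v \<Rightarrow> 'v) \<Rightarrow> 'v::ab_group_add set \<Rightarrow> nat \<Rightarrow> 'i set
     \<Rightarrow> ('v \<Rightarrow> 'i \<Rightarrow> rat \<times> rat \<Rightarrow> rat) \<Rightarrow> bool" where
  "iso_to_dsum_sym smul rho S d I \<phi> \<longleftrightarrow>
     bij_betw \<phi> S (dsum_sym d I) \<and>
     (\<forall>v\<in>S. \<forall>v'\<in>S. \<phi> (v + v') = (\<lambda>i p. \<phi> v i p + \<phi> v' i p)) \<and>
     (\<forall>c. \<forall>v\<in>S. \<phi> (smul c v) = (\<lambda>i p. c * \<phi> v i p)) \<and>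
     (\<forall>A\<in>SL2Z. \<forall>v\<in>S. \<phi> (rho A v) = (\<lambda>i. subst_act A (\<phi> v i)))"

end

theory Submission
  imports Defs "HOL-Computational_Algebra.Formal_Power_Series" "HOL-Computational_Algebra.Polynomial"
begin


lemma mult_2: "((A::'a::comm_ring_1^2^2) ** B) $ i $ j = A$i$1 * B$1$j + A$i$2 * B$2$j"
  by (simp add: matrix_matrix_mult_def sum_2)

lemma mat_eqI: "(A::'a^2^2)$1$1 = B$1$1 \<Longrightarrow> A$1$2 = B$1$2 \<Longrightarrow> A$2$1 = B$2$1 \<Longrightarrow> A$2$2 = B$2$2 \<Longrightarrow> A = B"
  by (simp add: vec_eq_iff forall_2)

lemma mat_u_nth[simp]: "mat_u$1$1 = 1" "mat_u$1$2 = 1" "mat_u$2$1 = 0" "mat_u$2$2 = 1"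
  by (simp_all add: mat_u_def)
lemma mat_w_nth[simp]: "mat_w$1$1 = 0" "mat_w$1$2 = 1" "mat_w$2$1 = -1" "mat_w$2$2 = 0"
  by (simp_all add: mat_w_def)
lemma mat1_nth[simp]: "(mat 1::int^2^2)$1$1 = 1" "(mat 1::int^2^2)$1$2 = 0" "(mat 1::int^2^2)$2$1 = 0" "(mat 1::int^2^2)$2$2 = 1"
  by (simp_all add: mat_def)

lemma mod_abs_lt: "(c::int) \<noteq> 0 \<Longrightarrow> \<bar>a mod c\<bar> < \<bar>c\<bar>"
proof (cases "c > 0")
  case True then show ?thesis using pos_mod_sign[of c a] pos_mod_bound[of c a] by simp
next
  case False
  assume "c \<noteq> 0" with False have "c < 0" by simp
  then show ?thesis using neg_mod_sign[of c a] neg_mod_bound[of c a] by simp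
qed

definition um :: "int \<Rightarrow> int^2^2" where
  "um q = (\<chi> i j. if i = j then 1 else if i = 1 \<and> j = 2 then q else 0)"
lemma um_nth[simp]: "um q$1$1 = 1" "um q$1$2 = q" "um q$2$1 = 0" "um q$2$2 = 1"
  by (simp_all add: um_def)

lemma det_um: "det (um q) = 1" by (simp add: det_2)
lemma det_w: "det mat_w = 1" by (simp add: det_2)

inductive gen :: "int^2^2 \<Rightarrow> bool" where
  gen1: "gen (mat 1)"
| genu: "gen A \<Longrightarrow> gen (mat_u ** A)"
| genw: "gen A \<Longrightarrow> gen (mat_w ** A)"

lemma gen_mult: "gen A \<Longrightarrow> gen B \<Longrightarrow> gen (A ** B)"
  by (induction A rule: gen.induct) (auto, metis matrix_mul_assoc gen.intros, metis matrix_mul_assoc gen.intros)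

lemma gen_u: "gen mat_u" using genu[OF gen1] by simp
lemma gen_w: "gen mat_w" using genw[OF gen1] by simp

lemma gen_uinv: "gen (um (-1))"
proof -
  have "um (-1) = mat_w ** (mat_u ** (mat_w ** (mat_u ** mat_w)))"
    by (rule mat_eqI) (simp_all add: mult_2)
  then show ?thesis by (metis gen_mult gen_u gen_w)
qed

lemma gen_um_nat: "gen (um (int m))" "gen (um (- int m))"
proof (induction m)
  case 0
  have "um 0 = mat 1" by (rule mat_eqI) simp_all
  then show "gen (um (int 0))" "gen (um (- int 0))" by (simp_all add: gen1)
next
  case (Suc m)
  have "um (int (Suc m)) = mat_u ** um (int m)" by (rule mat_eqI) (simp_all add: mult_2)
  then show "gen (um (int (Suc m)))" using Suc gen_mult gen_u by metis
  have "um (- int (Suc m)) = um (-1) ** um (- int m)" by (rule mat_eqI) (simp_all add: mult_2)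
  then show "gen (um (- int (Suc m)))" using Suc gen_mult gen_uinv by metis
qed

lemma gen_um: "gen (um q)"
proof (cases "q \<ge> 0")
  case True then have "q = int (nat q)" by simp
  then show ?thesis by (metis gen_um_nat(1))
next
  case False then have "q = - int (nat (-q))" by simp
  then show ?thesis by (metis gen_um_nat(2))
qed

lemma gen_all_aux: "\<forall>A::int^2^2. nat \<bar>A$2$1\<bar> = k \<longrightarrow> det A = 1 \<longrightarrow> gen A"
proof (induction k rule: less_induct)
  case (less k)
  show ?case
  proof (intro allI impI)
    fix A :: "int^2^2"
    assume k: "nat \<bar>A$2$1\<bar> = k" and d: "det A = 1"
    have d2: "A$1$1 * A$2$2 - A$1$2 * A$2$1 = 1" using d by (simp add: det_2)
    show "gen A"
    proof (cases "A$2$1 = 0")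
      case True
      then have "A$1$1 * A$2$2 = 1" using d2 by simp
      then have "(A$1$1 = 1 \<and> A$2$2 = 1) \<or> (A$1$1 = -1 \<and> A$2$2 = -1)"
        using zmult_eq_1_iff by blast
      then show ?thesis
      proof
        assume h: "A$1$1 = 1 \<and> A$2$2 = 1"
        have "A = um (A$1$2)" by (rule mat_eqI) (use h True in simp_all)
        then show ?thesis using gen_um by metis
      next
        assume h: "A$1$1 = -1 \<and> A$2$2 = -1"
        have "A = mat_w ** (mat_w ** um (- A$1$2))" by (rule mat_eqI) (use h True in \<open>simp_all add: mult_2\<close>)
        then show ?thesis using gen_um gen_mult gen_w by metis
      qed
    next
      case False
      define a b c d where "a = A$1$1" "b = A$1$2" "c = A$2$1" "d = A$2$2"
      define q where "q = a div c"
      define B where "B = mat_w ** (um (-q) ** A)"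
      have Bn: "B$2$1 = - (a mod c)" unfolding B_def a_b_c_d_def q_def
        by (simp add: mult_2 minus_div_mult_eq_mod[symmetric] algebra_simps)
      have "\<bar>a mod c\<bar> < \<bar>c\<bar>" using False unfolding a_b_c_d_def by (rule mod_abs_lt)
      then have lt: "nat \<bar>B$2$1\<bar> < k" using k Bn a_b_c_d_def by simp
      have "det B = 1" unfolding B_def by (simp add: det_mul det_w det_um d)
      then have "gen B" using less lt by blast
      have "A = um q ** (mat_w ** (mat_w ** (mat_w ** B)))" unfolding B_def
        by (rule mat_eqI) (simp_all add: mult_2 algebra_simps)
      then show ?thesis using \<open>gen B\<close> gen_um gen_w gen_mult by metis
    qed
  qed
qed

lemma gen_all: "A \<in> SL2Z \<Longrightarrow> gen A"
  using gen_all_aux SL2Z_def by auto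

lemma det_u: "det mat_u = 1" by (simp add: det_2)
lemma u_SL: "mat_u \<in> SL2Z" and w_SL: "mat_w \<in> SL2Z" and one_SL: "mat 1 \<in> SL2Z"
  by (simp_all add: SL2Z_def det_u det_w)
lemma gen_SL2Z: "gen A \<Longrightarrow> A \<in> SL2Z"
  by (induction rule: gen.induct) (auto simp: SL2Z_def det_mul det_u det_w)




definition Lp :: "rat fps" where "Lp = Abs_fps (\<lambda>k. (-1)^k / of_nat (Suc k))"

lemma L_eq: "fps_ln (1::rat) = fps_X * Lp"
  by (intro fps_ext) (auto simp: fps_ln_nth Lp_def)

lemma Lp0: "fps_nth Lp 0 = 1" by (simp add: Lp_def)

lemma Lpow_nth: "m < k \<Longrightarrow> fps_nth (fps_ln (1::rat) ^ k) m = 0"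
  by (simp add: L_eq power_mult_distrib fps_X_power_mult_nth)

lemma exp_ln: "fps_exp 1 oo fps_ln (1::rat) = 1 + fps_X"
proof -
  have "(fps_exp (1::rat) - 1) oo fps_inv (fps_exp 1 - 1) = fps_X" by (rule fps_inv_right) simp_all
  then have "(fps_exp (1::rat) - 1) oo fps_ln 1 = fps_X" using fps_ln_fps_exp_inv[of "1::rat"] by simp
  then have "(fps_exp 1 oo fps_ln (1::rat)) - 1 = fps_X" by (simp add: fps_compose_sub_distrib)
  then show ?thesis by (simp add: algebra_simps)
qed

lemma trunc_exp: "m < n \<Longrightarrow>
  fps_nth (\<Sum>k<n. fps_const (1/fact k) * fps_ln (1::rat) ^ k) m = fps_nth (1 + fps_X) m"
proof -
  assume m: "m < n"
  have "fps_nth (\<Sum>k<n. fps_const (1/fact k) * fps_ln (1::rat) ^ k) m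
      = (\<Sum>k<n. (1/fact k) * fps_nth (fps_ln 1 ^ k) m)" by (simp add: fps_sum_nth)
  also have "\<dots> = (\<Sum>k\<in>{0..m}. (1/fact k) * fps_nth (fps_ln 1 ^ k) m)"
    by (rule sum.mono_neutral_right) (use m Lpow_nth in auto)
  also have "\<dots> = fps_nth (fps_exp 1 oo fps_ln (1::rat)) m"
    by (simp add: fps_compose_nth)
  finally show ?thesis by (simp add: exp_ln)
qed

lemma X_pow_eq: "(fps_X::rat fps) ^ k = fps_ln 1 ^ k * inverse Lp ^ k"
proof -
  have "Lp * inverse Lp = 1" by (rule inverse_mult_eq_1') (simp add: Lp0)
  then have "fps_ln 1 * inverse Lp = fps_X" by (simp add: L_eq mult.assoc)
  then show ?thesis by (metis power_mult_distrib)
qed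




locale Lctx = vector_space smul for smul :: "rat \<Rightarrow> 'v::ab_group_add \<Rightarrow> 'v" +
  fixes rho :: "int^2^2 \<Rightarrow> 'v \<Rightarrow> 'v" and n :: nat
  assumes n2: "n \<ge> 2" and rep: "sl2_rep smul rho"
    and nil: "\<forall>v. (u_minus_1 rho ^^ n) v = 0"
    and hyp: "\<forall>k\<in>{1..n}. \<forall>v.
           smul (1 / fact (n - k))
             (rho mat_w ((log_u smul rho ^^ (n - k)) (rho mat_w ((log_u smul rho ^^ (n - 1)) v))))
         = smul ((-1) ^ (n - k) / fact (k - 1))
             ((log_u smul rho ^^ (k - 1)) (rho mat_w ((log_u smul rho ^^ (n - 1)) v)))"
begin

definition lin :: "('v \<Rightarrow> 'v) \<Rightarrow> bool" where
  "lin f \<longleftrightarrow> (\<forall>x y. f (x + y) = f x + f y) \<and> (\<forall>c x. f (smul c x) = smul c (f x))"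

lemma lin_add: "lin f \<Longrightarrow> f (x + y) = f x + f y" by (simp add: lin_def)
lemma lin_scale: "lin f \<Longrightarrow> f (smul c x) = smul c (f x)" by (simp add: lin_def)
lemma lin_0: "lin f \<Longrightarrow> f 0 = 0"
  using lin_scale[of f 0 0] by simp
lemma lin_sum: "lin f \<Longrightarrow> f (\<Sum>i\<in>S. g i) = (\<Sum>i\<in>S. f (g i))"
  by (induction S rule: infinite_finite_induct) (auto simp: lin_0 lin_add)
lemma lin_diff: "lin f \<Longrightarrow> f (x - y) = f x - f y"
  using lin_scale[of f "-1" y] lin_add[of f x "-y"] by (simp add: scale_minus_left[symmetric])
lemma lin_comp: "lin f \<Longrightarrow> lin g \<Longrightarrow> lin (\<lambda>x. f (g x))" by (simp add: lin_def)
lemma lin_id: "lin (\<lambda>x. x)" by (simp add: lin_def)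
lemma lin_pow: "lin f \<Longrightarrow> lin (f ^^ k)"
  by (induction k) (auto simp: lin_id[unfolded id_def[symmetric]] lin_comp[unfolded comp_def[symmetric]] lin_def)

lemma rep_vs: "\<forall>A\<in>SL2Z. Vector_Spaces.linear smul smul (rho A)" "rho (mat 1) = id"
  "\<forall>A\<in>SL2Z. \<forall>B\<in>SL2Z. rho (A ** B) = rho A \<circ> rho B"
  using rep by (auto simp: sl2_rep_def)

lemma lin_rho: "A \<in> SL2Z \<Longrightarrow> lin (rho A)"
  using rep_vs(1) by (auto simp: lin_def Vector_Spaces.linear_iff)

lemma rho_mult: "A \<in> SL2Z \<Longrightarrow> B \<in> SL2Z \<Longrightarrow> rho (A ** B) v = rho A (rho B v)"
  using rep_vs(3) by auto

lemma rho_1: "rho (mat 1) v = v" using rep_vs(2) by simp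

abbreviation "N \<equiv> u_minus_1 rho"
abbreviation "X \<equiv> log_u smul rho"
abbreviation "Wm \<equiv> rho mat_w"

lemma N_eq: "N v = rho mat_u v - v" by (simp add: u_minus_1_def)

lemma lin_N: "lin N"
  using lin_rho[OF u_SL] unfolding lin_def u_minus_1_def by (simp add: scale_right_diff_distrib)

lemma lin_Npow: "lin (N ^^ k)" using lin_pow lin_N by blast

lemma Npow_add: "(N ^^ (i + j)) v = (N ^^ i) ((N ^^ j) v)" by (simp add: funpow_add)

lemma Npow_ge: "k \<ge> n \<Longrightarrow> (N ^^ k) v = 0"
proof -
  assume "k \<ge> n"
  then have "(N ^^ k) v = (N ^^ (k - n)) ((N ^^ n) v)" by (simp flip: Npow_add)
  then show ?thesis using nil lin_0[OF lin_Npow] by simp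
qed

lemma len: "rep_length rho \<le> n" "\<forall>v. (N ^^ rep_length rho) v = 0"
proof -
  have ex: "\<exists>k. \<forall>v. (N ^^ k) v = 0" using nil by blast
  show "rep_length rho \<le> n" unfolding rep_length_def using nil by (auto intro: Least_le)
  show "\<forall>v. (N ^^ rep_length rho) v = 0" unfolding rep_length_def using LeastI_ex[OF ex] .
qed

lemma Npow_ge_len: "k \<ge> rep_length rho \<Longrightarrow> (N ^^ k) v = 0"
proof -
  assume "k \<ge> rep_length rho"
  then have "(N ^^ k) v = (N ^^ (k - rep_length rho)) ((N ^^ rep_length rho) v)" by (simp flip: Npow_add)
  then show ?thesis using len lin_0[OF lin_Npow] by simp
qed

lemma neg1pow: "0 < x \<Longrightarrow> (-1::rat)^(x - Suc 0) = - ((-1)^x)" by (cases x) auto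

definition ev :: "rat fps \<Rightarrow> 'v \<Rightarrow> 'v" where
  "ev f v = (\<Sum>i<n. smul (fps_nth f i) ((N ^^ i) v))"

lemma ev_mult: "ev (f * g) v = ev f (ev g v)"
proof -
  define T where "T = (\<lambda>i j. smul (fps_nth f i * fps_nth g j) ((N ^^ (i + j)) v))"
  have "ev f (ev g v) = (\<Sum>i<n. \<Sum>j<n. T i j)"
    unfolding ev_def T_def
    by (simp add: lin_sum[OF lin_Npow] lin_scale[OF lin_Npow] scale_sum_right Npow_add)
  also have "\<dots> = (\<Sum>(i,j)\<in>{..<n}\<times>{..<n}. T i j)" by (simp add: sum.cartesian_product)
  also have "\<dots> = (\<Sum>(i,j)\<in>{(i,j). i + j < n}. T i j)"
    by (rule sum.mono_neutral_right) (auto simp: T_def, meson Npow_ge not_less)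
  also have "\<dots> = (\<Sum>k<n. \<Sum>i\<le>k. T i (k - i))" by (rule sum.triangle_reindex)
  also have "\<dots> = ev (f * g) v"
    unfolding ev_def T_def fps_mult_nth
    by (intro sum.cong refl) (simp add: scale_sum_left atLeast0AtMost)
  finally show ?thesis by simp
qed

lemma ev_add: "ev (f + g) v = ev f v + ev g v"
  by (simp add: ev_def scale_left_distrib sum.distrib)

lemma ev_const_mult: "ev (fps_const c * f) v = smul c (ev f v)"
  by (simp add: ev_def scale_sum_right)

lemma ev_zero: "ev 0 v = 0" by (simp add: ev_def)

lemma ev_sum: "ev (\<Sum>k\<in>S. f k) v = (\<Sum>k\<in>S. ev (f k) v)"
  by (induction S rule: infinite_finite_induct) (auto simp: ev_zero ev_add)

lemma ev_cong: "(\<And>m. m < n \<Longrightarrow> fps_nth f m = fps_nth g m) \<Longrightarrow> ev f v = ev g v"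
  by (simp add: ev_def)

lemma ev_1: "ev 1 v = v"
proof -
  have "ev 1 v = (\<Sum>i\<in>{0}. smul (fps_nth 1 i) ((N ^^ i) v))" unfolding ev_def
    by (rule sum.mono_neutral_right) (use n2 in auto)
  then show ?thesis by simp
qed

lemma ev_X: "ev fps_X v = N v"
proof -
  have "ev fps_X v = (\<Sum>i\<in>{1}. smul (fps_nth fps_X i) ((N ^^ i) v))" unfolding ev_def
    by (rule sum.mono_neutral_right) (use n2 in auto)
  then show ?thesis by simp
qed

lemma ev_Xpow: "ev (fps_X ^ k) v = (N ^^ k) v"
  by (induction k arbitrary: v) (simp_all add: ev_1 ev_mult ev_X funpow_swap1)

lemma ev_L: "ev (fps_ln 1) v = X v"
proof -
  define h where "h = (\<lambda>i. smul (if i = 0 then 0 else (-1)^(i+1) / of_nat i) ((N ^^ i) v))"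
  have "ev (fps_ln 1) v = (\<Sum>i<n. h i)" unfolding ev_def h_def
    by (intro sum.cong refl) (auto simp: fps_ln_nth power_Suc2 neg1pow)
  also have "\<dots> = (\<Sum>i\<le>n. h i)"
    by (rule sum.mono_neutral_left) (auto simp: h_def Npow_ge)
  also have "\<dots> = (\<Sum>i\<in>{1..n}. h i)"
    by (rule sum.mono_neutral_right) (auto simp: h_def)
  also have "\<dots> = (\<Sum>i\<in>{1..rep_length rho}. h i)"
    by (rule sum.mono_neutral_right) (use len in \<open>auto simp: h_def Npow_ge_len\<close>)
  also have "\<dots> = X v" unfolding log_u_def h_def by (intro sum.cong refl) auto
  finally show ?thesis .
qed

lemma ev_Lpow: "ev (fps_ln 1 ^ k) v = (X ^^ k) v"
  by (induction k arbitrary: v) (simp_all add: ev_1 ev_mult ev_L funpow_swap1)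

lemma lin_ev: "lin (ev f)"
  unfolding lin_def ev_def
  by (simp add: lin_add[OF lin_Npow] lin_scale[OF lin_Npow] scale_right_distrib sum.distrib scale_sum_right mult.commute)

lemma lin_X: "lin X" using lin_ev[of "fps_ln 1"] ev_L by (simp add: lin_def)
lemma lin_Xpow: "lin (X ^^ k)" using lin_pow lin_X by blast

lemma Xpow_ge: "k \<ge> n \<Longrightarrow> (X ^^ k) v = 0"
proof -
  assume k: "k \<ge> n"
  have "(X ^^ k) v = ev (fps_ln 1 ^ k) v" by (simp add: ev_Lpow)
  also have "\<dots> = ev 0 v" by (rule ev_cong) (use k Lpow_nth in auto)
  finally show ?thesis by (simp add: ev_zero)
qed

lemma R_exp: "rho mat_u v = (\<Sum>k<n. smul (1 / fact k) ((X ^^ k) v))"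
proof -
  have "rho mat_u v = ev (1 + fps_X) v" by (simp add: ev_add ev_1 ev_X N_eq)
  also have "\<dots> = ev (\<Sum>k<n. fps_const (1/fact k) * fps_ln (1::rat) ^ k) v"
    by (rule ev_cong) (simp add: trunc_exp)
  also have "\<dots> = (\<Sum>k<n. smul (1 / fact k) ((X ^^ k) v))"
    by (simp add: ev_sum ev_const_mult ev_Lpow)
  finally show ?thesis .
qed

lemma Nd_range: "(N ^^ k) v \<in> range (X ^^ k)"
proof -
  have "(N ^^ k) v = ev (fps_ln 1 ^ k * inverse Lp ^ k) v" by (simp add: ev_Xpow flip: X_pow_eq)
  also have "\<dots> = (X ^^ k) (ev (inverse Lp ^ k) v)" by (simp add: ev_mult ev_Lpow)
  finally show ?thesis by simp
qed

end



definition hp :: "nat \<Rightarrow> (nat \<Rightarrow> rat) \<Rightarrow> rat \<times> rat \<Rightarrow> rat" where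
  "hp d c = (\<lambda>(x,y). \<Sum>i\<le>d. c i * x^i * y^(d-i))"

lemma hp_app: "hp d c (x,y) = (\<Sum>i\<le>d. c i * x^i * y^(d-i))" by (simp add: hp_def)

lemma hom_poly_iff: "p \<in> hom_poly d \<longleftrightarrow> (\<exists>c. p = hp d c)"
  by (auto simp: hom_poly_def hp_def fun_eq_iff)

lemma hp_inj: "hp d c = hp d c' \<Longrightarrow> i \<le> d \<Longrightarrow> c i = c' i"
proof -
  assume h: "hp d c = hp d c'" and i: "i \<le> d"
  define q where "q = (\<Sum>j\<le>d. monom (c j - c' j) j)"
  have "poly q x = 0" for x
  proof -
    have "poly q x = (\<Sum>j\<le>d. (c j - c' j) * x^j)" by (simp add: q_def poly_sum poly_monom)
    also have "\<dots> = hp d c (x,1) - hp d c' (x,1)" by (simp add: hp_app algebra_simps sum_subtractf)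
    finally show ?thesis using h by simp
  qed
  then have "q = 0" using poly_all_0_iff_0 by blast
  then have "coeff q i = 0" by simp
  moreover have "coeff q i = c i - c' i" using i
    by (simp add: q_def coeff_sum)
  ultimately show ?thesis by simp
qed

definition cf :: "nat \<Rightarrow> (rat \<times> rat \<Rightarrow> rat) \<Rightarrow> nat \<Rightarrow> rat" where
  "cf d p = (SOME c. p = hp d c)"

lemma cf_hp: "i \<le> d \<Longrightarrow> cf d (hp d c) i = c i"
proof -
  assume i: "i \<le> d"
  have "hp d c = hp d (cf d (hp d c))" unfolding cf_def by (rule someI[of _ c]) simp
  then show ?thesis using hp_inj i by metis
qed

lemma hp_cf: "p \<in> hom_poly d \<Longrightarrow> p = hp d (cf d p)"
proof -
  assume "p \<in> hom_poly d"
  then have "\<exists>c. p = hp d c" by (simp add: hom_poly_iff)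
  then show ?thesis unfolding cf_def by (rule someI_ex)
qed

lemma hp_add: "hp d (\<lambda>i. c i + c' i) = (\<lambda>z. hp d c z + hp d c' z)"
  by (auto simp: hp_def fun_eq_iff algebra_simps sum.distrib)

lemma hp_scale: "hp d (\<lambda>i. a * c i) = (\<lambda>z. a * hp d c z)"
  by (auto simp: hp_def fun_eq_iff algebra_simps sum_distrib_left)

lemma hp_0: "hp d (\<lambda>i. 0) = (\<lambda>z. 0)"
  by (auto simp: hp_def fun_eq_iff)

lemma hp_eq_0: "hp d c = (\<lambda>z. 0) \<Longrightarrow> i \<le> d \<Longrightarrow> c i = 0"
  using hp_inj[of d c "\<lambda>i. 0" i] hp_0 by simp

lemma binom_shift: "i \<le> d \<Longrightarrow> (x::rat)^i * (x+y)^(d-i) =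
   (\<Sum>m\<le>d. if i \<le> m then of_nat ((d-i) choose (m-i)) * x^m * y^(d-m) else 0)"
proof -
  assume i: "i \<le> d"
  have "x^i * (x+y)^(d-i) = x^i * (\<Sum>k\<le>d-i. of_nat ((d-i) choose k) * x^k * y^(d-i-k))"
    by (simp add: binomial_ring)
  also have "\<dots> = (\<Sum>k\<in>{0..d-i}. of_nat ((d-i) choose ((k+i)-i)) * x^(k+i) * y^(d-(k+i)))"
    by (simp add: sum_distrib_left power_add algebra_simps atLeast0AtMost diff_diff_left)
  also have "\<dots> = (\<Sum>m\<in>{0+i..d-i+i}. of_nat ((d-i) choose (m-i)) * x^m * y^(d-m))"
    by (rule sum.shift_bounds_cl_nat_ivl[symmetric])
  also have "\<dots> = (\<Sum>m\<in>{i..d}. of_nat ((d-i) choose (m-i)) * x^m * y^(d-m))" using i by simp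
  also have "\<dots> = (\<Sum>m\<le>d. if i \<le> m then of_nat ((d-i) choose (m-i)) * x^m * y^(d-m) else 0)"
    by (simp add: sum.If_cases) (rule sum.cong, auto)
  finally show ?thesis .
qed

definition cu :: "nat \<Rightarrow> (nat \<Rightarrow> rat) \<Rightarrow> nat \<Rightarrow> rat" where
  "cu d c m = (\<Sum>i\<le>d. if i \<le> m then c i * of_nat ((d-i) choose (m-i)) else 0)"

lemma subst_u: "subst_act mat_u (hp d c) = hp d (cu d c)"
proof -
  have "subst_act mat_u (hp d c) (x,y) = hp d (cu d c) (x,y)" for x y
  proof -
    have "subst_act mat_u (hp d c) (x,y) = (\<Sum>i\<le>d. c i * (x^i * (x+y)^(d-i)))"
      by (simp add: subst_act_def hp_app mult.assoc)
    also have "\<dots> = (\<Sum>i\<le>d. \<Sum>m\<le>d. if i \<le> m then c i * of_nat ((d-i) choose (m-i)) * x^m * y^(d-m) else 0)"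
      by (intro sum.cong refl) (simp add: binom_shift sum_distrib_left if_distrib, intro sum.cong refl, simp add: mult.assoc)
    also have "\<dots> = (\<Sum>m\<le>d. \<Sum>i\<le>d. if i \<le> m then c i * of_nat ((d-i) choose (m-i)) * x^m * y^(d-m) else 0)"
      by (rule sum.swap)
    also have "\<dots> = hp d (cu d c) (x,y)"
      by (simp add: hp_app cu_def sum_distrib_right) (intro sum.cong refl, simp)
    finally show ?thesis .
  qed
  then show ?thesis by auto
qed

definition cw :: "nat \<Rightarrow> (nat \<Rightarrow> rat) \<Rightarrow> nat \<Rightarrow> rat" where
  "cw d c m = c (d - m) * (-1)^(d-m)"

lemma subst_w: "subst_act mat_w (hp d c) = hp d (cw d c)"
proof -
  have "subst_act mat_w (hp d c) (x,y) = hp d (cw d c) (x,y)" for x y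
  proof -
    have "subst_act mat_w (hp d c) (x,y) = (\<Sum>i\<le>d. c i * (-y)^i * x^(d-i))"
      by (simp add: subst_act_def hp_app)
    also have "\<dots> = (\<Sum>i\<in>{0..d}. c (d + 0 - i) * (-y)^(d + 0 - i) * x^(d-(d + 0 - i)))"
      by (subst sum.atLeastAtMost_rev) (simp add: atLeast0AtMost)
    also have "\<dots> = hp d (cw d c) (x,y)"
      by (auto simp: hp_app cw_def atLeast0AtMost power_minus' intro!: sum.cong)
    finally show ?thesis .
  qed
  then show ?thesis by auto
qed

lemma subst_1: "subst_act (mat 1) p = p"
  by (simp add: subst_act_def)

lemma subst_mult: "subst_act (A ** B) p = subst_act A (subst_act B p)"
  by (auto simp: subst_act_def mult_2 fun_eq_iff algebra_simps)




context Lctx begin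

lemma W4: "Wm (Wm (Wm (Wm v))) = v"
proof -
  have "mat_w ** (mat_w ** (mat_w ** mat_w)) = (mat 1 :: int^2^2)"
    by (rule mat_eqI) (simp_all add: mult_2)
  moreover have "rho (mat_w ** (mat_w ** (mat_w ** mat_w))) v = Wm (Wm (Wm (Wm v)))"
    using w_SL by (simp add: rho_mult SL2Z_def det_mul det_w)
  ultimately show ?thesis by (simp add: rho_1)
qed

lemma WW_inj: "Wm (Wm y) = 0 \<Longrightarrow> y = 0"
  using W4[of y] lin_0[OF lin_rho[OF w_SL]] by simp

lemma hypW: "i \<le> n - 1 \<Longrightarrow> Wm ((X^^i) (Wm ((X^^(n-1)) v)))
   = smul (fact i * (-1)^i / fact (n-1-i)) ((X^^(n-1-i)) (Wm ((X^^(n-1)) v)))"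
proof -
  assume i: "i \<le> n - 1"
  have k: "n - i \<in> {1..n}" using i n2 by auto
  have e1: "n - (n - i) = i" and e2: "n - i - 1 = n - 1 - i" using i n2 by auto
  have "smul (1 / fact i) (Wm ((X^^i) (Wm ((X^^(n-1)) v))))
     = smul ((-1)^i / fact (n-1-i)) ((X^^(n-1-i)) (Wm ((X^^(n-1)) v)))"
    using hyp k unfolding e1 e2 by (metis e1 e2)
  then have "smul (fact i) (smul (1 / fact i) (Wm ((X^^i) (Wm ((X^^(n-1)) v)))))
     = smul (fact i) (smul ((-1)^i / fact (n-1-i)) ((X^^(n-1-i)) (Wm ((X^^(n-1)) v))))" by simp
  then show ?thesis by simp
qed

lemma hypWW: "(X^^(n-1)) (Wm ((X^^(n-1)) v)) = smul (fact (n-1)) (Wm (Wm ((X^^(n-1)) v)))"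
  using hypW[of 0 v] by simp

end

locale Lctx2 = Lctx smul rho n for smul :: "rat \<Rightarrow> 'v::ab_group_add \<Rightarrow> 'v" and rho n +
  fixes B :: "'v set"
  assumes B_sub: "B \<subseteq> range (log_u smul rho ^^ (n-1))" and B_ind: "independent B"
begin

abbreviation "d \<equiv> n - 1"

lemma sum_if_ivl: "(\<Sum>m\<le>(dd::nat). if i \<le> m then g m else 0) = (\<Sum>m\<in>{i..dd}. g m)"
proof -
  have "{m\<in>{..dd}. i \<le> m} = {i..dd}" by auto
  then show ?thesis by (metis sum.inter_filter finite_atMost)
qed

definition E :: "'v \<Rightarrow> nat \<Rightarrow> 'v" where "E b i = (X^^i) (Wm b)"

definition psi :: "'v \<Rightarrow> (rat \<times> rat \<Rightarrow> rat) \<Rightarrow> 'v" where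
  "psi b p = (\<Sum>i\<le>d. smul (cf d p i * fact (d - i)) (E b i))"

lemma psi_hp: "psi b (hp d c) = (\<Sum>i\<le>d. smul (c i * fact (d - i)) (E b i))"
  unfolding psi_def by (intro sum.cong refl) (simp add: cf_hp)

lemma psi_0: "psi b (\<lambda>z. 0) = 0"
  using psi_hp[of b "\<lambda>i. 0"] by (simp add: hp_0)

lemma psi_add: "p \<in> hom_poly d \<Longrightarrow> q \<in> hom_poly d \<Longrightarrow> psi b (\<lambda>z. p z + q z) = psi b p + psi b q"
proof -
  assume "p \<in> hom_poly d" "q \<in> hom_poly d"
  then obtain c c' where "p = hp d c" "q = hp d c'" by (auto simp: hom_poly_iff)
  then show ?thesis
    by (simp only: hp_add[symmetric] psi_hp) (simp add: scale_left_distrib sum.distrib algebra_simps)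
qed

lemma psi_scale: "p \<in> hom_poly d \<Longrightarrow> psi b (\<lambda>z. a * p z) = smul a (psi b p)"
proof -
  assume "p \<in> hom_poly d"
  then obtain c where "p = hp d c" by (auto simp: hom_poly_iff)
  then show ?thesis
    by (simp only: hp_scale[symmetric] psi_hp) (simp add: scale_sum_right mult.assoc)
qed

lemma E_ge: "j \<ge> n \<Longrightarrow> E b j = 0" by (simp add: E_def Xpow_ge)

lemma XE: "(X^^k) (E b i) = E b (k + i)" by (simp add: E_def funpow_add)

lemma R_E: "i \<le> d \<Longrightarrow> rho mat_u (E b i) = (\<Sum>m\<le>d. smul (if i \<le> m then 1 / fact (m - i) else 0) (E b m))"
proof -
  assume i: "i \<le> d"
  have "rho mat_u (E b i) = (\<Sum>k<n. smul (1 / fact k) (E b (k + i)))" by (simp add: R_exp XE)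
  also have "\<dots> = (\<Sum>k\<in>{0..d-i}. smul (1 / fact k) (E b (k + i)))"
    by (rule sum.mono_neutral_right) (use i n2 in \<open>auto simp: E_ge\<close>)
  also have "\<dots> = (\<Sum>k\<in>{0..d-i}. smul (1 / fact ((k + i) - i)) (E b (k + i)))" by simp
  also have "\<dots> = (\<Sum>m\<in>{0+i..d-i+i}. smul (1 / fact (m - i)) (E b m))"
    by (rule sum.shift_bounds_cl_nat_ivl[symmetric])
  also have "\<dots> = (\<Sum>m\<in>{i..d}. smul (1 / fact (m - i)) (E b m))"
  proof -
    have e: "d - i + i = d" "0 + i = i" using i by simp_all
    show ?thesis by (simp only: e)
  qed
  also have "\<dots> = (\<Sum>m\<le>d. if i \<le> m then smul (1 / fact (m - i)) (E b m) else 0)"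
    by (rule sum_if_ivl[symmetric])
  also have "\<dots> = (\<Sum>m\<le>d. smul (if i \<le> m then 1 / fact (m - i) else 0) (E b m))"
    by (intro sum.cong refl) auto
  finally show ?thesis .
qed

lemma psi_u: "p \<in> hom_poly d \<Longrightarrow> rho mat_u (psi b p) = psi b (subst_act mat_u p)"
proof -
  assume "p \<in> hom_poly d"
  then obtain c where p: "p = hp d c" by (auto simp: hom_poly_iff)
  have "rho mat_u (psi b p) = (\<Sum>i\<le>d. smul (c i * fact (d - i)) (rho mat_u (E b i)))"
    by (simp only: p psi_hp) (simp add: lin_sum[OF lin_rho[OF u_SL]] lin_scale[OF lin_rho[OF u_SL]])
  also have "\<dots> = (\<Sum>i\<le>d. \<Sum>m\<le>d. smul (c i * fact (d - i) * (if i \<le> m then 1 / fact (m - i) else 0)) (E b m))"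
    by (intro sum.cong refl) (simp add: R_E scale_sum_right)
  also have "\<dots> = (\<Sum>m\<le>d. \<Sum>i\<le>d. smul (c i * fact (d - i) * (if i \<le> m then 1 / fact (m - i) else 0)) (E b m))"
    by (rule sum.swap)
  also have "\<dots> = (\<Sum>m\<le>d. smul (cu d c m * fact (d - m)) (E b m))"
  proof (intro sum.cong refl)
    fix m assume m: "m \<in> {..d}"
    have "(\<Sum>i\<le>d. c i * fact (d - i) * (if i \<le> m then 1 / fact (m - i) else 0)) = cu d c m * fact (d - m)"
      unfolding cu_def sum_distrib_right
    proof (intro sum.cong refl)
      fix i assume "i \<in> {..d}"
      show "c i * fact (d - i) * (if i \<le> m then 1 / fact (m - i) else 0) =
        (if i \<le> m then c i * of_nat ((d - i) choose (m - i)) else 0) * fact (d - m)"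
      proof (cases "i \<le> m")
        case True
        then have "of_nat ((d - i) choose (m - i)) = (fact (d-i) / (fact (m-i) * fact (d - m)) :: rat)"
          using m by (simp add: binomial_fact)
        then show ?thesis using True by (simp add: field_simps)
      qed simp
    qed
    then show "(\<Sum>i\<le>d. smul (c i * fact (d - i) * (if i \<le> m then 1 / fact (m - i) else 0)) (E b m))
        = smul (cu d c m * fact (d - m)) (E b m)" by (simp add: scale_sum_left[symmetric])
  qed
  also have "\<dots> = psi b (subst_act mat_u p)" by (simp only: p subst_u psi_hp)
  finally show ?thesis .
qed

lemma psi_w: "p \<in> hom_poly d \<Longrightarrow> b \<in> B \<Longrightarrow> Wm (psi b p) = psi b (subst_act mat_w p)"
proof -
  assume "p \<in> hom_poly d" and b: "b \<in> B"
  then obtain c where p: "p = hp d c" by (auto simp: hom_poly_iff)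
  obtain v where bv: "b = (X^^d) v" using b B_sub by auto
  have WE: "i \<le> d \<Longrightarrow> Wm (E b i) = smul (fact i * (-1)^i / fact (d-i)) (E b (d - i))" for i
    unfolding E_def bv by (rule hypW)
  have "Wm (psi b p) = (\<Sum>i\<le>d. smul (c i * fact (d - i)) (Wm (E b i)))"
    by (simp only: p psi_hp) (simp add: lin_sum[OF lin_rho[OF w_SL]] lin_scale[OF lin_rho[OF w_SL]])
  also have "\<dots> = (\<Sum>i\<in>{0..d}. smul (c i * fact i * (-1)^i) (E b (d - i)))"
    by (auto simp: atLeast0AtMost WE intro!: sum.cong)
  also have "\<dots> = (\<Sum>i\<in>{0..d}. smul (c (d + 0 - i) * fact (d + 0 - i) * (-1)^(d + 0 - i)) (E b (d - (d + 0 - i))))"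
    by (rule sum.atLeastAtMost_rev)
  also have "\<dots> = (\<Sum>m\<in>{0..d}. smul (cw d c m * fact (d - m)) (E b m))"
  proof (rule sum.cong[OF refl])
    fix x assume x: "x \<in> {0..d}"
    have e: "d + 0 - x = d - x" "d - (d - x) = x" using x by auto
    show "smul (c (d + 0 - x) * fact (d + 0 - x) * (-1)^(d + 0 - x)) (E b (d - (d + 0 - x)))
      = smul (cw d c x * fact (d - x)) (E b x)" unfolding e cw_def by (simp only: mult_ac)
  qed
  also have "\<dots> = (\<Sum>m\<le>d. smul (cw d c m * fact (d - m)) (E b m))" by (simp only: atLeast0AtMost)
  also have "\<dots> = psi b (subst_act mat_w p)" by (simp only: p subst_w psi_hp)
  finally show ?thesis .
qed

end



declare One_nat_def[simp del]

context Lctx2 begin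

definition supp :: "('v \<Rightarrow> rat \<times> rat \<Rightarrow> rat) \<Rightarrow> 'v set" where
  "supp F = {b. F b \<noteq> (\<lambda>_. 0)}"

abbreviation "Dd \<equiv> dsum_sym d B"

definition Psi :: "('v \<Rightarrow> rat \<times> rat \<Rightarrow> rat) \<Rightarrow> 'v" where
  "Psi F = (\<Sum>b\<in>supp F. psi b (F b))"

definition actF :: "int^2^2 \<Rightarrow> ('v \<Rightarrow> rat \<times> rat \<Rightarrow> rat) \<Rightarrow> ('v \<Rightarrow> rat \<times> rat \<Rightarrow> rat)" where
  "actF A F = (\<lambda>i. subst_act A (F i))"

lemma Dd_mem: "F \<in> Dd \<longleftrightarrow> (\<forall>i. F i \<in> hom_poly d) \<and> (\<forall>i. i \<notin> B \<longrightarrow> F i = (\<lambda>_. 0)) \<and> finite (supp F)"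
  by (simp add: dsum_sym_def supp_def)

lemma supp_B: "F \<in> Dd \<Longrightarrow> supp F \<subseteq> B"
  by (auto simp: Dd_mem supp_def)

lemma Psi_sup: "F \<in> Dd \<Longrightarrow> finite T \<Longrightarrow> supp F \<subseteq> T \<Longrightarrow> Psi F = (\<Sum>b\<in>T. psi b (F b))"
  unfolding Psi_def by (rule sum.mono_neutral_left) (auto simp: supp_def psi_0)

lemma zero_hom: "(\<lambda>_. 0) \<in> hom_poly d"
  using hp_0[of d] hom_poly_iff by metis

lemma hom_add: "p \<in> hom_poly d \<Longrightarrow> q \<in> hom_poly d \<Longrightarrow> (\<lambda>z. p z + q z) \<in> hom_poly d"
  by (auto simp: hom_poly_iff hp_add[symmetric])

lemma hom_scale: "p \<in> hom_poly d \<Longrightarrow> (\<lambda>z. a * p z) \<in> hom_poly d"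
  by (auto simp: hom_poly_iff hp_scale[symmetric])

lemma Dd_add: "F \<in> Dd \<Longrightarrow> G \<in> Dd \<Longrightarrow> (\<lambda>i z. F i z + G i z) \<in> Dd"
proof -
  assume F: "F \<in> Dd" and G: "G \<in> Dd"
  have "supp (\<lambda>i z. F i z + G i z) \<subseteq> supp F \<union> supp G" by (auto simp: supp_def)
  then show ?thesis using F G
    by (auto simp: Dd_mem hom_add intro: finite_subset)
qed

lemma Dd_scale: "F \<in> Dd \<Longrightarrow> (\<lambda>i z. a * F i z) \<in> Dd"
proof -
  assume F: "F \<in> Dd"
  have "supp (\<lambda>i z. a * F i z) \<subseteq> supp F" by (auto simp: supp_def)
  then show ?thesis using F
    by (auto simp: Dd_mem hom_scale intro: finite_subset)
qed

lemma Dd_0: "(\<lambda>i z. 0) \<in> Dd"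
  by (simp add: Dd_mem zero_hom supp_def)

lemma Psi_add: "F \<in> Dd \<Longrightarrow> G \<in> Dd \<Longrightarrow> Psi (\<lambda>i z. F i z + G i z) = Psi F + Psi G"
proof -
  assume F: "F \<in> Dd" and G: "G \<in> Dd"
  define T where "T = supp F \<union> supp G"
  have T: "finite T" using F G by (simp add: T_def Dd_mem)
  have "Psi (\<lambda>i z. F i z + G i z) = (\<Sum>b\<in>T. psi b (\<lambda>z. F b z + G b z))"
    by (rule Psi_sup[OF Dd_add[OF F G] T]) (auto simp: T_def supp_def)
  also have "\<dots> = (\<Sum>b\<in>T. psi b (F b)) + (\<Sum>b\<in>T. psi b (G b))"
    using F G by (simp add: Dd_mem psi_add sum.distrib)
  also have "\<dots> = Psi F + Psi G"
    using Psi_sup[OF F T] Psi_sup[OF G T] by (simp add: T_def)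
  finally show ?thesis .
qed

lemma Psi_scale: "F \<in> Dd \<Longrightarrow> Psi (\<lambda>i z. a * F i z) = smul a (Psi F)"
proof -
  assume F: "F \<in> Dd"
  have T: "finite (supp F)" using F by (simp add: Dd_mem)
  have "Psi (\<lambda>i z. a * F i z) = (\<Sum>b\<in>supp F. psi b (\<lambda>z. a * F b z))"
    by (rule Psi_sup[OF Dd_scale[OF F] T]) (auto simp: supp_def)
  also have "\<dots> = smul a (Psi F)"
    using F by (simp add: Dd_mem psi_scale Psi_def scale_sum_right)
  finally show ?thesis .
qed

lemma Psi_0: "Psi (\<lambda>i z. 0) = 0" by (simp add: Psi_def supp_def)

lemma subst_zero: "subst_act A (\<lambda>_. 0) = (\<lambda>_. 0)"
  by (auto simp: subst_act_def)

lemma act_step: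
  assumes M: "M \<in> SL2Z" and hM: "\<And>p. p \<in> hom_poly d \<Longrightarrow> subst_act M p \<in> hom_poly d"
    and hpsi: "\<And>b p. b \<in> B \<Longrightarrow> p \<in> hom_poly d \<Longrightarrow> rho M (psi b p) = psi b (subst_act M p)"
    and F: "F \<in> Dd"
  shows "actF M F \<in> Dd \<and> rho M (Psi F) = Psi (actF M F)"
proof
  have ss: "supp (actF M F) \<subseteq> supp F" by (auto simp: supp_def actF_def subst_zero)
  show A: "actF M F \<in> Dd" using F ss
    by (auto simp: Dd_mem actF_def hM subst_zero intro: finite_subset)
  have T: "finite (supp F)" using F by (simp add: Dd_mem)
  have "rho M (Psi F) = (\<Sum>b\<in>supp F. rho M (psi b (F b)))"
    by (simp add: Psi_def lin_sum[OF lin_rho[OF M]])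
  also have "\<dots> = (\<Sum>b\<in>supp F. psi b (actF M F b))"
    using F supp_B[OF F] by (intro sum.cong refl) (auto simp: actF_def Dd_mem hpsi)
  also have "\<dots> = Psi (actF M F)" by (rule Psi_sup[OF A T ss, symmetric])
  finally show "rho M (Psi F) = Psi (actF M F)" .
qed

lemma hom_u: "p \<in> hom_poly d \<Longrightarrow> subst_act mat_u p \<in> hom_poly d"
  by (auto simp: hom_poly_iff subst_u)

lemma hom_w: "p \<in> hom_poly d \<Longrightarrow> subst_act mat_w p \<in> hom_poly d"
  by (auto simp: hom_poly_iff subst_w)

lemma gen_G: "gen A \<Longrightarrow> \<forall>F\<in>Dd. actF A F \<in> Dd \<and> rho A (Psi F) = Psi (actF A F)"
proof (induction rule: gen.induct)
  case gen1
  then show ?case by (simp add: actF_def subst_1 rho_1)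
next
  case (genu A)
  show ?case
  proof
    fix F assume F: "F \<in> Dd"
    have h: "actF A F \<in> Dd" "rho A (Psi F) = Psi (actF A F)" using genu F by auto
    have s: "actF (mat_u ** A) F = actF mat_u (actF A F)" by (simp add: actF_def subst_mult)
    show "actF (mat_u ** A) F \<in> Dd \<and> rho (mat_u ** A) (Psi F) = Psi (actF (mat_u ** A) F)"
      using act_step[OF u_SL hom_u psi_u h(1)] h(2) gen_SL2Z[OF genu(1)] s
      by (simp add: rho_mult u_SL)
  qed
next
  case (genw A)
  show ?case
  proof
    fix F assume F: "F \<in> Dd"
    have h: "actF A F \<in> Dd" "rho A (Psi F) = Psi (actF A F)" using genw F by auto
    have s: "actF (mat_w ** A) F = actF mat_w (actF A F)" by (simp add: actF_def subst_mult)
    show "actF (mat_w ** A) F \<in> Dd \<and> rho (mat_w ** A) (Psi F) = Psi (actF (mat_w ** A) F)"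
      using act_step[OF w_SL hom_w psi_w h(1)] h(2) gen_SL2Z[OF genw(1)] s
      by (simp add: rho_mult w_SL)
  qed
qed

lemma all_G: "A \<in> SL2Z \<Longrightarrow> F \<in> Dd \<Longrightarrow> actF A F \<in> Dd \<and> rho A (Psi F) = Psi (actF A F)"
  using gen_G gen_all by blast

end



context Lctx2 begin

lemma EBd: "b \<in> B \<Longrightarrow> E b d = smul (fact d) (Wm (Wm b))"
proof -
  assume "b \<in> B"
  then obtain v where bv: "b = (X^^d) v" using B_sub by auto
  show ?thesis unfolding E_def bv by (rule hypWW)
qed

lemma hp_cong: "(\<And>i. i \<le> dd \<Longrightarrow> c i = c' i) \<Longrightarrow> hp dd c = hp dd c'"
  by (auto simp: hp_def fun_eq_iff intro!: sum.cong)

lemma Psi_inj0: "F \<in> Dd \<Longrightarrow> Psi F = 0 \<Longrightarrow> F = (\<lambda>i z. 0)"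
proof -
  assume F: "F \<in> Dd" and P0: "Psi F = 0"
  define S where "S = supp F"
  define c where "c = (\<lambda>b. cf d (F b))"
  have S: "finite S" "S \<subseteq> B" using F supp_B[OF F] by (auto simp: S_def Dd_mem)
  have Fb: "F b = hp d (c b)" for b using F by (simp add: Dd_mem c_def hp_cf)
  have PsiF: "Psi F = (\<Sum>b\<in>S. \<Sum>j\<le>d. smul (c b j * fact (d-j)) (E b j))"
    by (simp add: Psi_def S_def psi_def c_def)
  have claim: "m \<le> d \<longrightarrow> (\<forall>b\<in>S. c b m = 0)" for m
  proof (induction m rule: less_induct)
    case (less m)
    show ?case
    proof (intro impI)
      assume m: "m \<le> d"
      define a where "a = (\<lambda>b. c b m * fact (d-m) * fact d)"
      have inner: "(\<Sum>j\<le>d. smul (c b j * fact (d-j)) (E b (d - m + j))) = smul (a b) (Wm (Wm b))"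
        if b: "b \<in> S" for b
      proof -
        have "(\<Sum>j\<le>d. smul (c b j * fact (d-j)) (E b (d - m + j)))
            = (\<Sum>j\<le>d. if j = m then smul (c b m * fact (d-m)) (E b d) else 0)"
        proof (intro sum.cong refl)
          fix j assume j: "j \<in> {..d}"
          consider "j < m" | "j = m" | "j > m" by linarith
          then show "smul (c b j * fact (d-j)) (E b (d - m + j)) = (if j = m then smul (c b m * fact (d-m)) (E b d) else 0)"
          proof cases
            case 1 then show ?thesis using less m b by auto
          next
            case 2 then have "d - m + j = d" using m by simp
            then show ?thesis using 2 by simp
          next
            case 3 then have "d - m + j \<ge> n" using m n2 by auto
            then show ?thesis using 3 by (simp add: E_ge)
          qed
        qed
        also have "\<dots> = smul (c b m * fact (d-m)) (E b d)" using m by simp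
        also have "\<dots> = smul (a b) (Wm (Wm b))"
        proof -
          have bB: "b \<in> B" using b S by auto
          show ?thesis by (simp only: EBd[OF bB] a_def scale_scale mult.assoc)
        qed
        finally show ?thesis .
      qed
      have "0 = (X^^(d-m)) (Psi F)" using P0 lin_0[OF lin_Xpow] by simp
      also have "\<dots> = (\<Sum>b\<in>S. \<Sum>j\<le>d. smul (c b j * fact (d-j)) (E b (d - m + j)))"
        by (simp add: PsiF lin_sum[OF lin_Xpow] lin_scale[OF lin_Xpow] XE add.commute)
      also have "\<dots> = (\<Sum>b\<in>S. smul (a b) (Wm (Wm b)))" by (rule sum.cong[OF refl]) (rule inner)
      also have "\<dots> = Wm (Wm (\<Sum>b\<in>S. smul (a b) b))"
        by (simp add: lin_sum[OF lin_rho[OF w_SL]] lin_scale[OF lin_rho[OF w_SL]])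
      finally have "(\<Sum>b\<in>S. smul (a b) b) = 0" using WW_inj by metis
      then have "\<forall>b\<in>S. a b = 0" using independentD[OF B_ind S(1) S(2)] by blast
      then show "\<forall>b\<in>S. c b m = 0" by (simp add: a_def)
    qed
  qed
  have "S = {}"
  proof (rule ccontr)
    assume "S \<noteq> {}"
    then obtain b where b: "b \<in> S" by auto
    have "F b = hp d (\<lambda>i. 0)" unfolding Fb by (rule hp_cong) (use claim b in auto)
    then have "F b = (\<lambda>_. 0)" by (simp add: hp_0)
    then show False using b by (simp add: S_def supp_def)
  qed
  then show ?thesis by (auto simp: S_def supp_def fun_eq_iff)
qed

lemma Psi_inj: "inj_on Psi Dd"
proof (rule inj_onI)
  fix F G assume F: "F \<in> Dd" and G: "G \<in> Dd" and e: "Psi F = Psi G"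
  have G': "(\<lambda>i z. (-1) * G i z) \<in> Dd" using Dd_scale[OF G] .
  have "Psi (\<lambda>i z. F i z + (\<lambda>i z. (-1) * G i z) i z) = 0"
    using Psi_add[OF F G'] Psi_scale[OF G, of "-1"] e by simp
  then have H: "(\<lambda>i z. F i z + (\<lambda>i z. (-1) * G i z) i z) = (\<lambda>i z. 0)"
    using Psi_inj0[OF Dd_add[OF F G']] by blast
  have "F i z = G i z" for i z using fun_cong[OF fun_cong[OF H, of i], of z] by simp
  then show "F = G" by (auto simp: fun_eq_iff)
qed

definition "Vtop = Psi ` Dd"

lemma Vtop_sub: "subspace Vtop"
proof (rule subspaceI)
  have "Psi (\<lambda>i z. 0) \<in> Psi ` Dd" using Dd_0 by (rule imageI)
  then show "0 \<in> Vtop" unfolding Vtop_def Psi_0 .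
next
  fix x y assume "x \<in> Vtop" "y \<in> Vtop"
  then obtain F G where FG: "F \<in> Dd" "G \<in> Dd" "x = Psi F" "y = Psi G" by (auto simp: Vtop_def)
  have "Psi (\<lambda>i z. F i z + G i z) \<in> Psi ` Dd" using Dd_add[OF FG(1,2)] by (rule imageI)
  then show "x + y \<in> Vtop" unfolding Vtop_def Psi_add[OF FG(1,2)] FG(3,4) .
next
  fix c x assume "x \<in> Vtop"
  then obtain F where FG: "F \<in> Dd" "x = Psi F" by (auto simp: Vtop_def)
  have "Psi (\<lambda>i z. c * F i z) \<in> Psi ` Dd" using Dd_scale[OF FG(1)] by (rule imageI)
  then show "smul c x \<in> Vtop" unfolding Vtop_def Psi_scale[OF FG(1)] FG(2) .
qed

lemma Vtop_rho: "A \<in> SL2Z \<Longrightarrow> v \<in> Vtop \<Longrightarrow> rho A v \<in> Vtop"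
proof -
  assume A: "A \<in> SL2Z" and "v \<in> Vtop"
  then obtain F where F: "F \<in> Dd" "v = Psi F" by (auto simp: Vtop_def)
  have "Psi (actF A F) \<in> Psi ` Dd" using all_G[OF A F(1)] by (intro imageI) simp
  then show ?thesis using all_G[OF A F(1)] F(2) by (simp add: Vtop_def)
qed

lemma B_Vtop: "b \<in> B \<Longrightarrow> b \<in> Vtop"
proof -
  assume b: "b \<in> B"
  define F0 where "F0 = (\<lambda>b'. if b' = b then hp d (\<lambda>i. if i = d then 1 else 0) else (\<lambda>_. 0))"
  have sF: "supp F0 \<subseteq> {b}" by (auto simp: supp_def F0_def)
  have h1: "hp d (\<lambda>i. if i = d then 1 else 0) \<in> hom_poly d" by (auto simp: hom_poly_iff)
  have "F0 i \<in> hom_poly d" for i using h1 zero_hom by (simp add: F0_def)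
  moreover have "i \<notin> B \<Longrightarrow> F0 i = (\<lambda>_. 0)" for i using b by (auto simp: F0_def)
  moreover have "finite (supp F0)" using sF by (rule finite_subset) simp
  ultimately have F0: "F0 \<in> Dd" unfolding Dd_mem by blast
  have "Psi F0 = psi b (F0 b)" using Psi_sup[OF F0 _ sF] by simp
  also have "\<dots> = (\<Sum>i\<le>d. smul ((if i = d then 1 else 0) * fact (d - i)) (E b i))"
    unfolding F0_def by (simp only: simp_thms if_True psi_hp)
  also have "\<dots> = (\<Sum>i\<le>d. if i = d then E b i else 0)" by (intro sum.cong refl) simp
  also have "\<dots> = E b d" by (simp add: sum.delta')
  also have "\<dots> = smul (fact d) (Wm (Wm b))" using b by (rule EBd)
  finally have "Wm (Wm (smul (1 / fact d) (Psi F0))) = b"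
    using W4[of b] by (simp add: lin_scale[OF lin_rho[OF w_SL]])
  moreover have "Psi F0 \<in> Vtop" using F0 by (simp add: Vtop_def)
  ultimately show ?thesis using Vtop_rho[OF w_SL] Vtop_sub subspace_scale by metis
qed

lemma main:
  assumes B_span: "range (X^^d) \<subseteq> span B"
  shows "\<exists>Vtop. sl2_submodule smul rho Vtop \<and>
           (\<forall>v. (N ^^ d) v \<in> Vtop) \<and>
           (\<exists>(I :: 'v set) \<phi>. iso_to_dsum_sym smul rho Vtop d I \<phi>)"
proof (intro exI conjI)
  show "sl2_submodule smul rho Vtop"
    unfolding sl2_submodule_def using Vtop_sub Vtop_rho by blast
  have "span B \<subseteq> Vtop" using B_Vtop Vtop_sub by (intro span_minimal) auto
  then show "\<forall>v. (N ^^ d) v \<in> Vtop" using Nd_range B_span by blast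
  define phi where "phi = the_inv_into Dd Psi"
  have bij: "bij_betw Psi Dd Vtop" using Psi_inj by (simp add: bij_betw_def Vtop_def)
  have inv: "F \<in> Dd \<Longrightarrow> phi (Psi F) = F" for F using Psi_inj by (simp add: phi_def the_inv_into_f_f)
  show "iso_to_dsum_sym smul rho Vtop d B phi"
    unfolding iso_to_dsum_sym_def
  proof (intro conjI ballI allI)
    show "bij_betw phi Vtop Dd" unfolding phi_def by (rule bij_betw_the_inv_into[OF bij])
  next
    fix v v' assume "v \<in> Vtop" "v' \<in> Vtop"
    then obtain F G where FG: "F \<in> Dd" "G \<in> Dd" "v = Psi F" "v' = Psi G" by (auto simp: Vtop_def)
    show "phi (v + v') = (\<lambda>i p. phi v i p + phi v' i p)"
      using FG by (simp add: Psi_add[symmetric] inv Dd_add)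
  next
    fix c v assume "v \<in> Vtop"
    then obtain F where FG: "F \<in> Dd" "v = Psi F" by (auto simp: Vtop_def)
    show "phi (smul c v) = (\<lambda>i p. c * phi v i p)"
      using FG by (simp add: Psi_scale[symmetric] inv Dd_scale)
  next
    fix A v assume A: "A \<in> SL2Z" and "v \<in> Vtop"
    then obtain F where FG: "F \<in> Dd" "v = Psi F" by (auto simp: Vtop_def)
    show "phi (rho A v) = (\<lambda>i. subst_act A (phi v i))"
      using FG all_G[OF A FG(1)] by (simp add: inv actF_def)
  qed
qed

end

theorem lemma1:
  fixes smul :: "rat \<Rightarrow> 'v::ab_group_add \<Rightarrow> 'v"
    and rho :: "int^2^2 \<Rightarrow> 'v \<Rightarrow> 'v"
    and n :: nat
  assumes "n \<ge> 2"
    and "sl2_rep smul rho"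
    and "\<forall>v. (u_minus_1 rho ^^ n) v = 0"
    and "\<forall>k\<in>{1..n}. \<forall>v.
           smul (1 / fact (n - k))
             (rho mat_w ((log_u smul rho ^^ (n - k)) (rho mat_w ((log_u smul rho ^^ (n - 1)) v))))
         = smul ((-1) ^ (n - k) / fact (k - 1))
             ((log_u smul rho ^^ (k - 1)) (rho mat_w ((log_u smul rho ^^ (n - 1)) v)))"
  shows "\<exists>Vtop. sl2_submodule smul rho Vtop \<and>
           (\<forall>v. (u_minus_1 rho ^^ (n - 1)) v \<in> Vtop) \<and>
           (\<exists>(I :: 'v set) \<phi>. iso_to_dsum_sym smul rho Vtop (n - 1) I \<phi>)"
proof -
  have vs: "vector_space smul" using assms(2) by (simp add: sl2_rep_def)
  interpret L: Lctx smul rho n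
    using vs assms by (simp add: Lctx_def Lctx_axioms_def)
  obtain B where B: "B \<subseteq> range (log_u smul rho ^^ (n-1))" "L.independent B"
      "range (log_u smul rho ^^ (n-1)) \<subseteq> L.span B"
    by (rule L.maximal_independent_subset)
  interpret L2: Lctx2 smul rho n B
    using B assms vs by (simp add: Lctx2_def Lctx2_axioms_def Lctx_def Lctx_axioms_def)
  show ?thesis using L2.main[OF B(3)] .
qed

end
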